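(* There is a constant $C$ depending only on $n$ such that: if $A\in gl(n,\mathbb{C})$ is a nonzero block diagonal nilpotent matrix each of whose diagonal blocks is in reduced column echelon form, then there exists $S\in Gl(n,\mathbb{C})$ with $\|S^{\pm1}\|\le C(1+\|A\|)^{n!}$ such that $S^{-1}AS$ is in Jordan normal form; moreover $S$ is block diagonal with the same block decomposition as $A$.
   Context: $\|\cdot\|$ is the operator norm. The length of a nonzero column is the row index of its last nonzero entry. A matrix is in column echelon form if column lengths are strictly increasing except for the first columns which may be zero; its pivots are the last nonzero coefficients of its nonzero columns; reduced column echelon form means column echelon form with all pivots equal to $1$. *)

theory Defs
  imports Complex_Main "Jordan_Normal_Form.Jordan_Normal_Form"
begin

definition vnorm :: "complex vec \<Rightarrow> real" where
  "vnorm v = sqrt (\<Sum>i<dim_vec v. (cmod (v $ i))^2)"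

definition opnorm :: "complex mat \<Rightarrow> real" where
  "opnorm A = Sup {vnorm (A *\<^sub>v x) | x. x \<in> carrier_vec (dim_col A) \<and> vnorm x \<le> 1}"

definition nonzero_col :: "'a::zero mat \<Rightarrow> nat \<Rightarrow> bool" where
  "nonzero_col B j = (\<exists>i<dim_row B. B $$ (i,j) \<noteq> 0)"

(* length of a nonzero column: (0-based) row index of its last nonzero entry *)
definition col_len :: "'a::zero mat \<Rightarrow> nat \<Rightarrow> nat" where
  "col_len B j = (GREATEST i. i < dim_row B \<and> B $$ (i,j) \<noteq> 0)"

definition col_echelon :: "'a::zero mat \<Rightarrow> bool" where
  "col_echelon B = (\<exists>z\<le>dim_col B.
      (\<forall>j<z. \<not> nonzero_col B j) \<and>
      (\<forall>j. z \<le> j \<and> j < dim_col B \<longrightarrow> nonzero_col B j) \<and>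
      (\<forall>j j'. z \<le> j \<and> j < j' \<and> j' < dim_col B \<longrightarrow> col_len B j < col_len B j'))"

definition reduced_col_echelon :: "'a::{zero,one} mat \<Rightarrow> bool" where
  "reduced_col_echelon B = (col_echelon B \<and>
      (\<forall>j<dim_col B. nonzero_col B j \<longrightarrow> B $$ (col_len B j, j) = 1))"

definition nilpotent_mat :: "'a::comm_ring_1 mat \<Rightarrow> bool" where
  "nilpotent_mat A = (\<exists>k. A ^\<^sub>m k = 0\<^sub>m (dim_row A) (dim_col A))"

end

theory Submission
  imports Defs
begin

lemma vnorm_ge: assumes "i < dim_vec v" shows "cmod (v $ i) \<le> vnorm v"
proof -
  have "(cmod (v $ i))^2 \<le> (\<Sum>i<dim_vec v. (cmod (v $ i))^2)"
    by (rule member_le_sum[where f="\<lambda>i. (cmod (v $ i))^2"]) (use assms in auto)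
  then show ?thesis unfolding vnorm_def by (simp add: real_le_rsqrt)
qed

lemma vnorm_le: assumes "\<And>i. i < dim_vec v \<Longrightarrow> cmod (v $ i) \<le> c" "0 \<le> c"
  shows "vnorm v \<le> real (dim_vec v) * c"
proof -
  have "(\<Sum>i<dim_vec v. (cmod (v $ i))^2) \<le> (\<Sum>i<dim_vec v. c^2)"
    by (rule sum_mono) (use assms in \<open>auto intro: power_mono\<close>)
  also have "\<dots> = real (dim_vec v) * c^2" by simp
  also have "\<dots> \<le> (real (dim_vec v) * c)^2"
  proof (cases "dim_vec v = 0")
    case False
    then have "1 \<le> dim_vec v" by linarith
    then have "1 \<le> real (dim_vec v)" by simp
    then have "real (dim_vec v) \<le> real (dim_vec v)^2"
      using mult_left_mono[of 1 "real (dim_vec v)" "real (dim_vec v)"] by (simp add: power2_eq_square)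
    then show ?thesis by (simp add: power_mult_distrib mult_right_mono)
  qed simp
  finally show ?thesis unfolding vnorm_def using assms(2) by (intro real_le_lsqrt) auto
qed

lemma vnorm_nonneg: "0 \<le> vnorm v" unfolding vnorm_def by (simp add: sum_nonneg)

lemma opnorm_set_bound:
  assumes M: "M \<in> carrier_mat n n" and E: "\<And>i j. i < n \<Longrightarrow> j < n \<Longrightarrow> cmod (M $$ (i,j)) \<le> E"
    and x: "x \<in> carrier_vec n" and xn: "vnorm x \<le> 1"
  shows "vnorm (M *\<^sub>v x) \<le> real n * (real n * E)"
proof -
  have E0: "0 \<le> E" if "n > 0" using E[of 0 0] that by (meson norm_ge_zero order_trans)
  have ent: "cmod ((M *\<^sub>v x) $ i) \<le> real n * E" if i: "i < n" for i
  proof -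
    have "(M *\<^sub>v x) $ i = (\<Sum>j\<in>{0..<n}. M $$ (i,j) * x $ j)"
      using M x i by (auto simp: scalar_prod_def)
    also have "cmod \<dots> \<le> (\<Sum>j\<in>{0..<n}. cmod (M $$ (i,j) * x $ j))" by (rule norm_sum)
    also have "\<dots> \<le> (\<Sum>j\<in>{0..<n}. E)"
    proof (rule sum_mono)
      fix j assume j: "j \<in> {0..<n}"
      have "cmod (x $ j) \<le> 1" using vnorm_ge[of j x] x xn j by auto
      then show "cmod (M $$ (i, j) * x $ j) \<le> E"
        using E[of i j] i j E0 by (auto simp: norm_mult intro: mult_le_one order_trans[OF mult_mono])
    qed
    finally show ?thesis by simp
  qed
  show ?thesis
  proof (cases "n = 0")
    case True then show ?thesis using M unfolding vnorm_def by simp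
  next
    case False
    then show ?thesis using vnorm_le[of "M *\<^sub>v x" "real n * E"] ent M E0 by auto
  qed
qed

lemma opnorm_bdd:
  assumes M: "M \<in> carrier_mat n n" and E: "\<And>i j. i < n \<Longrightarrow> j < n \<Longrightarrow> cmod (M $$ (i,j)) \<le> E"
  shows "bdd_above {vnorm (M *\<^sub>v x) | x. x \<in> carrier_vec (dim_col M) \<and> vnorm x \<le> 1}"
  using opnorm_set_bound[OF M E] M unfolding bdd_above_def by auto

lemma opnorm_le:
  assumes M: "M \<in> carrier_mat n n" and E: "\<And>i j. i < n \<Longrightarrow> j < n \<Longrightarrow> cmod (M $$ (i,j)) \<le> E"
  shows "opnorm M \<le> real n * (real n * E)"
  unfolding opnorm_def
proof (rule cSup_least)
  show "{vnorm (M *\<^sub>v x) |x. x \<in> carrier_vec (dim_col M) \<and> vnorm x \<le> 1} \<noteq> {}"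
  proof -
    have "vnorm (M *\<^sub>v 0\<^sub>v (dim_col M)) \<in> {vnorm (M *\<^sub>v x) |x. x \<in> carrier_vec (dim_col M) \<and> vnorm x \<le> 1}"
      by (intro CollectI exI[of _ "0\<^sub>v (dim_col M)"]) (auto simp: vnorm_def)
    then show ?thesis by blast
  qed
qed (use opnorm_set_bound[OF M E] M in auto)

lemma entry_le_opnorm:
  assumes M: "M \<in> carrier_mat n n" and i: "i < n" and j: "j < n"
  shows "cmod (M $$ (i,j)) \<le> opnorm M"
proof -
  let ?E = "Max {cmod (M $$ (i,j)) | i j. i < n \<and> j < n}"
  have fin: "finite {cmod (M $$ (i,j)) | i j. i < n \<and> j < n}"
  proof -
    have "{cmod (M $$ (i,j)) | i j. i < n \<and> j < n} = (\<lambda>(i,j). cmod (M $$ (i,j))) ` ({..<n} \<times> {..<n})" by auto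
    then show ?thesis by simp
  qed
  have bdd: "bdd_above {vnorm (M *\<^sub>v x) | x. x \<in> carrier_vec (dim_col M) \<and> vnorm x \<le> 1}"
    by (rule opnorm_bdd[OF M, of ?E]) (use fin in \<open>auto intro!: Max_ge\<close>)
  let ?x = "unit_vec n j :: complex vec"
  have vx: "vnorm ?x = 1"
  proof -
    have "(\<Sum>k<n. (cmod (?x $ k))^2) = (\<Sum>k<n. if k = j then 1 else 0)"
      by (rule sum.cong) (use j in auto)
    also have "\<dots> = 1" using j by simp
    finally show ?thesis unfolding vnorm_def by simp
  qed
  have "(\<Sum>ia = 0..<n. M $$ (i, ia) * (if ia = j then 1 else 0)) = (\<Sum>ia = 0..<n. if ia = j then M $$ (i,j) else 0)"
    by (rule sum.cong) auto
  also have "\<dots> = M $$ (i,j)" using j by simp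
  finally have "cmod (M $$ (i,j)) = cmod ((M *\<^sub>v ?x) $ i)"
    using M i j by (simp add: scalar_prod_def)
  also have "\<dots> \<le> vnorm (M *\<^sub>v ?x)" using M i by (intro vnorm_ge) auto
  also have "\<dots> \<le> opnorm M" unfolding opnorm_def
    by (rule cSup_upper[OF _ bdd]) (use M vx in auto)
  finally show ?thesis .
qed

fun idx :: "(nat \<Rightarrow> nat) \<Rightarrow> nat list \<Rightarrow> nat \<Rightarrow> nat \<times> nat" where
  "idx Lf [] c = (0,0)"
| "idx Lf (t#ts) c = (if c < Lf t then (t, Lf t - 1 - c) else idx Lf ts (c - Lf t))"

fun bst :: "(nat \<Rightarrow> nat) \<Rightarrow> nat list \<Rightarrow> nat \<Rightarrow> bool" where
  "bst Lf [] c = True"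
| "bst Lf (t#ts) c = (if c < Lf t then c = 0 else bst Lf ts (c - Lf t))"

lemma bst0: "bst Lf ts 0" by (induct ts) auto

lemma idx_range: "c < sum_list (map Lf ts) \<Longrightarrow>
  fst (idx Lf ts c) \<in> set ts \<and> snd (idx Lf ts c) < Lf (fst (idx Lf ts c))"
  by (induct ts arbitrary: c) auto

lemma idx_inj: "distinct ts \<Longrightarrow> c < sum_list (map Lf ts) \<Longrightarrow> c' < sum_list (map Lf ts) \<Longrightarrow>
  idx Lf ts c = idx Lf ts c' \<Longrightarrow> c = c'"
proof (induct ts arbitrary: c c')
  case (Cons t ts)
  show ?case
  proof (cases "c < Lf t")
    case c: True
    show ?thesis
    proof (cases "c' < Lf t")
      case True with c Cons.prems show ?thesis by auto
    next
      case False
      with c Cons.prems have "idx Lf ts (c' - Lf t) = (t, Lf t - 1 - c)" by auto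
      then have "fst (idx Lf ts (c' - Lf t)) = t" by simp
      moreover have "fst (idx Lf ts (c' - Lf t)) \<in> set ts"
        using idx_range[of "c' - Lf t" Lf ts] False Cons.prems by auto
      ultimately show ?thesis using Cons.prems by auto
    qed
  next
    case c: False
    show ?thesis
    proof (cases "c' < Lf t")
      case True
      with c Cons.prems have "idx Lf ts (c - Lf t) = (t, Lf t - 1 - c')" by auto
      then have "fst (idx Lf ts (c - Lf t)) = t" by simp
      moreover have "fst (idx Lf ts (c - Lf t)) \<in> set ts"
        using idx_range[of "c - Lf t" Lf ts] c Cons.prems by auto
      ultimately show ?thesis using Cons.prems by auto
    next
      case False
      with c Cons.prems Cons.hyps[of "c - Lf t" "c' - Lf t"] have "c - Lf t = c' - Lf t" by auto
      with c False show ?thesis by linarith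
    qed
  qed
qed simp

lemma idx_surj: "t \<in> set ts \<Longrightarrow> k < Lf t \<Longrightarrow> \<exists>c < sum_list (map Lf ts). idx Lf ts c = (t,k)"
proof (induct ts)
  case (Cons t0 ts)
  show ?case
  proof (cases "t = t0")
    case True
    then show ?thesis using Cons.prems by (intro exI[of _ "Lf t - 1 - k"]) auto
  next
    case False
    then obtain c where "c < sum_list (map Lf ts)" "idx Lf ts c = (t,k)" using Cons by auto
    then show ?thesis by (intro exI[of _ "c + Lf t0"]) auto
  qed
qed simp

lemma idx_prev: "c < sum_list (map Lf ts) \<Longrightarrow> \<not> bst Lf ts c \<Longrightarrow>
  0 < c \<and> idx Lf ts (c - 1) = (fst (idx Lf ts c), Suc (snd (idx Lf ts c)))"
proof (induct ts arbitrary: c)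
  case (Cons t ts)
  show ?case
  proof (cases "c < Lf t")
    case True then show ?thesis using Cons.prems by auto
  next
    case False
    then have nb: "\<not> bst Lf ts (c - Lf t)" using Cons.prems by auto
    then have "c - Lf t \<noteq> 0" using bst0 by metis
    then show ?thesis using Cons.hyps[of "c - Lf t"] Cons.prems False nb
      by (auto simp: diff_diff_add add.commute)
  qed
qed simp

lemma idx_bst: "c < sum_list (map Lf ts) \<Longrightarrow> bst Lf ts c \<Longrightarrow>
  Suc (snd (idx Lf ts c)) = Lf (fst (idx Lf ts c))"
  by (induct ts arbitrary: c) auto

lemma jm_entry: "i < sum_list (map Lf ts) \<Longrightarrow> j < sum_list (map Lf ts) \<Longrightarrow>
  jordan_matrix (map (\<lambda>t. (Lf t, 0::complex)) ts) $$ (i,j) = (if Suc i = j \<and> \<not> bst Lf ts j then 1 else 0)"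
proof (induct ts arbitrary: i j)
  case (Cons t ts)
  let ?R = "jordan_matrix (map (\<lambda>t. (Lf t, 0::complex)) ts)"
  have dR: "dim_row ?R = sum_list (map Lf ts)" "dim_col ?R = sum_list (map Lf ts)"
    by (simp_all add: o_def)
  have eq: "jordan_matrix (map (\<lambda>t. (Lf t, 0::complex)) (t#ts)) =
    four_block_mat (jordan_block (Lf t) 0) (0\<^sub>m (Lf t) (dim_col ?R)) (0\<^sub>m (dim_row ?R) (Lf t)) ?R"
    unfolding jordan_matrix_def by (simp add: Let_def)
  show ?case unfolding eq using Cons.prems Cons.hyps[of "i - Lf t" "j - Lf t"] bst0[of Lf ts]
    by (auto simp: dR o_def)
qed simp

locale blk =
  fixes B :: "complex mat" and m z :: nat and p :: "nat \<Rightarrow> nat"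
  assumes B: "B \<in> carrier_mat m m" and zm: "z \<le> m"
  and zc: "\<And>i j. j < z \<Longrightarrow> i < m \<Longrightarrow> B $$ (i,j) = 0"
  and plt: "\<And>j. z \<le> j \<Longrightarrow> j < m \<Longrightarrow> p j < j"
  and piv1: "\<And>j. z \<le> j \<Longrightarrow> j < m \<Longrightarrow> B $$ (p j, j) = 1"
  and pabove: "\<And>i j. z \<le> j \<Longrightarrow> j < m \<Longrightarrow> p j < i \<Longrightarrow> i < m \<Longrightarrow> B $$ (i,j) = 0"
  and pmono: "\<And>j j'. z \<le> j \<Longrightarrow> j < j' \<Longrightarrow> j' < m \<Longrightarrow> p j < p j'"
begin

definition piv :: "complex vec \<Rightarrow> nat \<Rightarrow> bool" where
  "piv v j \<longleftrightarrow> v \<in> carrier_vec m \<and> j < m \<and> v $ j = 1 \<and> (\<forall>i. j < i \<and> i < m \<longrightarrow> v $ i = 0)"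

lemma Bv_entry: assumes v: "piv v j" and j: "z \<le> j" and i: "i < m" "p j \<le> i"
  shows "(B *\<^sub>v v) $ i = B $$ (i,j)"
proof -
  have "(B *\<^sub>v v) $ i = (\<Sum>l\<in>{0..<m}. B $$ (i,l) * v $ l)"
    using B v i by (auto simp: scalar_prod_def piv_def)
  also have "\<dots> = (\<Sum>l\<in>{0..<m}. if l = j then B $$ (i,j) else 0)"
  proof (rule sum.cong)
    fix l assume l: "l \<in> {0..<m}"
    show "B $$ (i,l) * v $ l = (if l = j then B $$ (i,j) else 0)"
    proof (cases "l = j")
      case True then show ?thesis using v by (simp add: piv_def)
    next
      case False
      show ?thesis
      proof (cases "l < j")
        case True
        show ?thesis
        proof (cases "l < z")
          case True then show ?thesis using zc[of l i] i by auto
        next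
          case False
          then have "p l < p j" using pmono[of l j] \<open>l < j\<close> v by (auto simp: piv_def)
          then show ?thesis using pabove[of l i] False l i \<open>l \<noteq> j\<close> by auto
        qed
      next
        case False
        then show ?thesis using v l \<open>l \<noteq> j\<close> by (auto simp: piv_def)
      qed
    qed
  qed simp
  also have "\<dots> = B $$ (i,j)" using v by (auto simp: piv_def)
  finally show ?thesis .
qed

lemma PV1: assumes v: "piv v j" and j: "z \<le> j" shows "piv (B *\<^sub>v v) (p j)"
proof -
  have jm: "j < m" using v by (auto simp: piv_def)
  have pj: "p j < m" using plt[OF j jm] jm by auto
  show ?thesis unfolding piv_def
    using B Bv_entry[OF v j] pj piv1[OF j jm] pabove[OF j jm] v[unfolded piv_def] by auto
qed

lemma PV0: assumes v: "piv v j" and j: "j < z" shows "B *\<^sub>v v = 0\<^sub>v m"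
proof (rule eq_vecI)
  fix i assume i: "i < dim_vec (0\<^sub>v m :: complex vec)"
  have "(B *\<^sub>v v) $ i = (\<Sum>l\<in>{0..<m}. B $$ (i,l) * v $ l)"
    using B v i by (auto simp: scalar_prod_def piv_def)
  also have "\<dots> = (\<Sum>l\<in>{0..<m}. 0)"
  proof (rule sum.cong)
    fix l assume l: "l \<in> {0..<m}"
    show "B $$ (i,l) * v $ l = 0"
    proof (cases "l \<le> j")
      case True then show ?thesis using zc[of l i] i j by auto
    next
      case False then show ?thesis using v l by (auto simp: piv_def)
    qed
  qed simp
  finally show "(B *\<^sub>v v) $ i = 0\<^sub>v m $ i" using i by simp
qed (use B in auto)

primrec w :: "nat \<Rightarrow> nat \<Rightarrow> complex vec" where
  "w t 0 = unit_vec m t"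
| "w t (Suc k) = B *\<^sub>v w t k"

lemma w_carrier: "w t k \<in> carrier_vec m"
  using B by (induct k) auto

lemma pk_dec: "t < m \<Longrightarrow> (\<forall>k'<k. z \<le> (p^^k') t) \<Longrightarrow> (p^^k) t + k \<le> t"
proof (induct k)
  case (Suc k)
  then have h: "(p^^k) t + k \<le> t" "z \<le> (p^^k) t" by auto
  then have "p ((p^^k) t) < (p^^k) t" using plt Suc.prems by auto
  then show ?case using h by simp
qed simp

lemma w_piv: "t < m \<Longrightarrow> (\<forall>k'<k. z \<le> (p^^k') t) \<Longrightarrow> piv (w t k) ((p^^k) t)"
proof (induct k)
  case 0 then show ?case by (auto simp: piv_def)
next
  case (Suc k)
  then have "piv (w t k) ((p^^k) t)" "z \<le> (p^^k) t" by auto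
  from PV1[OF this] show ?case by simp
qed

lemma exit_ex: assumes "t < m" shows "\<exists>k. (p^^k) t < z"
proof (rule ccontr)
  assume "\<not> ?thesis"
  then have "\<forall>k'<Suc t. z \<le> (p^^k') t" by (simp add: not_less)
  from pk_dec[OF assms this] show False by simp
qed

definition L :: "nat \<Rightarrow> nat" where "L t = Suc (LEAST k. (p^^k) t < z)"

lemma inD: "k' < L t - 1 \<Longrightarrow> z \<le> (p^^k') t"
  unfolding L_def using not_less_Least by fastforce

lemma exitL: "t < m \<Longrightarrow> (p^^(L t - 1)) t < z"
  unfolding L_def using LeastI_ex[OF exit_ex] by auto

lemma wL_piv: "t < m \<Longrightarrow> k < L t \<Longrightarrow> piv (w t k) ((p^^k) t)"
  by (rule w_piv) (auto intro: inD)

lemma kL_le: "t < m \<Longrightarrow> k < L t \<Longrightarrow> (p^^k) t + k \<le> t"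
  by (rule pk_dec) (auto intro: inD)

lemma w_end: assumes t: "t < m" shows "w t (L t) = 0\<^sub>v m"
proof -
  have "L t = Suc (L t - 1)" unfolding L_def by simp
  then have "w t (L t) = B *\<^sub>v w t (L t - 1)" by (metis w.simps(2))
  also have "\<dots> = 0\<^sub>v m" using PV0[OF wL_piv[OF t] exitL[OF t]] by (simp add: L_def)
  finally show ?thesis .
qed

lemma p_inj: "z \<le> j \<Longrightarrow> j < m \<Longrightarrow> z \<le> j' \<Longrightarrow> j' < m \<Longrightarrow> p j = p j' \<Longrightarrow> j = j'"
  using pmono by (metis less_irrefl nat_neq_iff)

lemma pk_inj: "a < m \<Longrightarrow> b < m \<Longrightarrow> (\<forall>k'<k. z \<le> (p^^k') a \<and> z \<le> (p^^k') b) \<Longrightarrow>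
  (p^^k) a = (p^^k) b \<Longrightarrow> a = b"
proof (induct k arbitrary: a b)
  case (Suc k)
  have za: "z \<le> a" "z \<le> b" using Suc.prems(3)[rule_format, of 0] by auto
  have pa: "p a < m" "p b < m" using plt za Suc.prems by (meson order.strict_trans)+
  have "(p^^k) (p a) = (p^^k) (p b)" using Suc.prems(4) by (simp add: funpow_Suc_right del: funpow.simps)
  moreover have "\<forall>k'<k. z \<le> (p^^k') (p a) \<and> z \<le> (p^^k') (p b)"
  proof (intro allI impI)
    fix k' assume "k' < k"
    moreover have "(p^^k') (p a) = (p^^(Suc k')) a" "(p^^k') (p b) = (p^^(Suc k')) b"
      by (simp_all only: funpow_Suc_right o_apply)
    ultimately show "z \<le> (p^^k') (p a) \<and> z \<le> (p^^k') (p b)" using Suc.prems(3) by auto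
  qed
  ultimately have "p a = p b" using Suc.hyps[OF pa] by blast
  then show ?case using p_inj za Suc.prems by blast
qed simp

definition Tp :: "nat set" where "Tp = {t. t < m \<and> (\<forall>j. z \<le> j \<longrightarrow> j < m \<longrightarrow> p j \<noteq> t)}"

lemma chain_eq1: assumes t: "t \<in> Tp" and t': "t' \<in> Tp" and k: "k < L t" and k': "k' < L t'"
  and kk: "k \<le> k'" and eq: "(p^^k) t = (p^^k') t'"
  shows "t = t' \<and> k = k'"
proof -
  have tm: "t < m" "t' < m" using t t' by (auto simp: Tp_def)
  define u where "u = (p^^(k'-k)) t'"
  have ueq: "(p^^k') t' = (p^^k) u" unfolding u_def
    by (metis funpow_add o_apply le_add_diff_inverse kk)
  have "k' - k < L t'" using k' by linarith
  then have um: "u < m" using kL_le[OF tm(2), of "k'-k"] tm unfolding u_def by linarith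
  have "\<forall>k''<k. z \<le> (p^^k'') t \<and> z \<le> (p^^k'') u"
  proof (intro allI impI conjI)
    fix k'' assume "k'' < k"
    then show "z \<le> (p^^k'') t" using k by (intro inD) auto
    have "(p^^k'') u = (p^^(k'' + (k'-k))) t'" unfolding u_def funpow_add by simp
    also have "z \<le> \<dots>" using \<open>k'' < k\<close> kk k' by (intro inD) auto
    finally show "z \<le> (p^^k'') u" .
  qed
  then have tu: "t = u" using pk_inj[OF tm(1) um] eq ueq by auto
  have "k' - k = 0"
  proof (rule ccontr)
    assume ne: "k' - k \<noteq> 0"
    then have "u = p ((p^^(k'-k-1)) t')" unfolding u_def
      by (metis Suc_diff_1 funpow.simps(2) neq0_conv o_apply)
    moreover have "z \<le> (p^^(k'-k-1)) t'" using ne k' kk by (intro inD) auto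
    moreover have "k'-k-1 < L t'" using k' by linarith
    then have "(p^^(k'-k-1)) t' < m" using kL_le[OF tm(2), of "k'-k-1"] tm by linarith
    ultimately show False using t tu unfolding Tp_def by auto
  qed
  then show ?thesis using tu kk unfolding u_def by auto
qed

lemma chain_eq: assumes "t \<in> Tp" "t' \<in> Tp" "k < L t" "k' < L t'" "(p^^k) t = (p^^k') t'"
  shows "t = t' \<and> k = k'"
  using chain_eq1[OF assms(1-4)] chain_eq1[OF assms(2,1,4,3)] assms(5) by (cases "k \<le> k'") auto

lemma chain_surj: "i < m \<Longrightarrow> \<exists>t\<in>Tp. \<exists>k<L t. (p^^k) t = i"
proof (induction "m - i" arbitrary: i rule: less_induct)
  case less
  show ?case
  proof (cases "i \<in> Tp")
    case True then show ?thesis by (intro bexI[of _ i] exI[of _ 0]) (auto simp: L_def)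
  next
    case False
    then obtain j where j: "z \<le> j" "j < m" "p j = i" using less.prems unfolding Tp_def by auto
    then have "i < j" using plt by auto
    then have "m - j < m - i" using j by auto
    then obtain t k where t: "t \<in> Tp" "k < L t" "(p^^k) t = j" using less.hyps[of j] j by auto
    have "Suc k < L t"
    proof (rule ccontr)
      assume "\<not> Suc k < L t"
      then have "k = L t - 1" using t by auto
      then show False using exitL[of t] t j by (auto simp: Tp_def)
    qed
    then show ?thesis using t j by (intro bexI[of _ t] exI[of _ "Suc k"]) auto
  qed
qed

end

context blk begin

definition ts :: "nat list" where "ts = sorted_list_of_set Tp"

lemma Tp_fin: "finite Tp" unfolding Tp_def by (rule finite_subset[of _ "{..<m}"]) auto
lemma set_ts: "set ts = Tp" unfolding ts_def using Tp_fin by simp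
lemma dist_ts: "distinct ts" unfolding ts_def by simp

abbreviation tot where "tot \<equiv> sum_list (map L ts)"

definition r :: "nat \<Rightarrow> nat" where "r c = (p ^^ snd (idx L ts c)) (fst (idx L ts c))"

lemma idx_ok: assumes "c < tot"
  shows "fst (idx L ts c) \<in> Tp" "snd (idx L ts c) < L (fst (idx L ts c))" "fst (idx L ts c) < m"
  using idx_range[OF assms] set_ts by (auto simp: Tp_def)

lemma r_bij: "bij_betw r {0..<tot} {0..<m}"
proof (rule bij_betw_imageI)
  show "inj_on r {0..<tot}"
  proof (rule inj_onI)
    fix c c' assume c: "c \<in> {0..<tot}" and c': "c' \<in> {0..<tot}" and eq: "r c = r c'"
    have "idx L ts c = idx L ts c'"
      using idx_ok[of c] idx_ok[of c'] c c' eq chain_eq[of "fst (idx L ts c)" "fst (idx L ts c')"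
        "snd (idx L ts c)" "snd (idx L ts c')"] unfolding r_def by (auto simp: prod_eq_iff)
    then show "c = c'" using idx_inj[OF dist_ts] c c' by auto
  qed
  show "r ` {0..<tot} = {0..<m}"
  proof
    show "r ` {0..<tot} \<subseteq> {0..<m}"
    proof
      fix x assume "x \<in> r ` {0..<tot}"
      then obtain c where c: "c < tot" "x = r c" by auto
      show "x \<in> {0..<m}" using kL_le[OF idx_ok(3)[OF c(1)] idx_ok(2)[OF c(1)]] idx_ok(3)[OF c(1)] c(2)
        unfolding r_def by auto
    qed
    show "{0..<m} \<subseteq> r ` {0..<tot}"
    proof
      fix i assume "i \<in> {0..<m}"
      then obtain t k where t: "t \<in> Tp" "k < L t" "(p^^k) t = i" using chain_surj[of i] by force
      then obtain c where "c < tot" "idx L ts c = (t,k)" using idx_surj[of t ts k L] set_ts by auto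
      then show "i \<in> r ` {0..<tot}" using t unfolding r_def by force
    qed
  qed
qed

lemma tot_eq: "tot = m"
  using bij_betw_same_card[OF r_bij] by simp

definition S :: "complex mat" where
  "S = mat m m (\<lambda>(i,c). w (fst (idx L ts c)) (snd (idx L ts c)) $ i)"

definition J :: "complex mat" where
  "J = jordan_matrix (map (\<lambda>t. (L t, 0)) ts)"

lemma S_carrier: "S \<in> carrier_mat m m" unfolding S_def by simp
lemma J_carrier: "J \<in> carrier_mat m m"
proof -
  have "map fst (map (\<lambda>t. (L t, 0::complex)) ts) = map L ts" by (induct ts) auto
  then show ?thesis unfolding J_def using jordan_matrix_carrier[of "map (\<lambda>t. (L t, 0::complex)) ts"] tot_eq
    by (simp add: o_def)
qed

lemma col_S: "c < m \<Longrightarrow> col S c = w (fst (idx L ts c)) (snd (idx L ts c))"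
  unfolding S_def using w_carrier[unfolded carrier_vec_def] by (intro eq_vecI) auto

lemma BS: "B * S = S * J"
proof (rule eq_matI)
  fix i c assume i: "i < dim_row (S * J)" and c: "c < dim_col (S * J)"
  then have i: "i < m" and c: "c < m" using S_carrier J_carrier by auto
  define t where "t = fst (idx L ts c)"
  define k where "k = snd (idx L ts c)"
  have ct: "c < tot" using c tot_eq by simp
  have lhs: "(B * S) $$ (i,c) = w t (Suc k) $ i"
    using B S_carrier i c col_S[OF c] unfolding t_def k_def by simp
  have rhs: "(S * J) $$ (i,c) = (\<Sum>c'\<in>{0..<m}. S $$ (i,c') * (if Suc c' = c \<and> \<not> bst L ts c then 1 else 0))"
    using S_carrier J_carrier i c jm_entry[of _ L ts c] tot_eq unfolding J_def[symmetric]
    by (auto simp: scalar_prod_def intro!: sum.cong)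
  show "(B * S) $$ (i,c) = (S * J) $$ (i,c)"
  proof (cases "bst L ts c")
    case True
    then have "Suc k = L t" using idx_bst[OF ct] unfolding t_def k_def by simp
    then have "w t (Suc k) = 0\<^sub>v m" using w_end idx_ok(3)[OF ct] unfolding t_def by simp
    then show ?thesis using lhs rhs True i by simp
  next
    case False
    note pr = idx_prev[OF ct False]
    have "(S * J) $$ (i,c) = (\<Sum>c'\<in>{0..<m}. if c' = c - 1 then S $$ (i, c - 1) else 0)"
      unfolding rhs using False pr by (intro sum.cong) auto
    also have "\<dots> = S $$ (i, c - 1)" using c by simp
    also have "\<dots> = w t (Suc k) $ i" using pr i c unfolding S_def t_def k_def by simp
    finally show ?thesis using lhs by simp
  qed
qed (use S_carrier J_carrier B in auto)

end

context blk begin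

lemma r_bij': "bij_betw r {0..<m} {0..<m}" using r_bij tot_eq by simp

definition rinv :: "nat \<Rightarrow> nat" where "rinv = the_inv_into {0..<m} r"

lemma rinv: "\<rho> < m \<Longrightarrow> rinv \<rho> < m \<and> r (rinv \<rho>) = \<rho>"
  unfolding rinv_def using r_bij' the_inv_into_into[of r "{0..<m}" \<rho> "{0..<m}"]
    f_the_inv_into_f_bij_betw[OF r_bij', of \<rho>]
  by (auto simp: bij_betw_def)

lemma rinv_r: "c < m \<Longrightarrow> rinv (r c) = c"
  unfolding rinv_def using r_bij' by (auto simp: bij_betw_def the_inv_into_f_f)

lemma r_lt: "c < m \<Longrightarrow> r c < m" using r_bij' by (auto simp: bij_betw_def)

lemma S_piv: assumes c: "c < m" shows "S $$ (r c, c) = 1" "\<And>i. r c < i \<Longrightarrow> i < m \<Longrightarrow> S $$ (i,c) = 0"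
proof -
  have ct: "c < tot" using c tot_eq by simp
  note pv = wL_piv[OF idx_ok(3)[OF ct] idx_ok(2)[OF ct]]
  show "S $$ (r c, c) = 1" using pv c r_lt[OF c] unfolding S_def r_def piv_def by simp
  show "\<And>i. r c < i \<Longrightarrow> i < m \<Longrightarrow> S $$ (i,c) = 0" using pv c unfolding S_def r_def piv_def by simp
qed

definition T :: "complex mat" where "T = mat m m (\<lambda>(i,\<rho>). S $$ (i, rinv \<rho>))"
definition N :: "complex mat" where "N = 1\<^sub>m m - T"

lemma T_carrier: "T \<in> carrier_mat m m" unfolding T_def by simp
lemma N_carrier: "N \<in> carrier_mat m m" using T_carrier unfolding N_def carrier_mat_def by simp
lemma dimT[simp]: "dim_row T = m" "dim_col T = m" using T_carrier by auto
lemma dimN[simp]: "dim_row N = m" "dim_col N = m" using N_carrier by auto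

lemma T_diag: "\<rho> < m \<Longrightarrow> T $$ (\<rho>,\<rho>) = 1"
  unfolding T_def using S_piv(1)[of "rinv \<rho>"] rinv[of \<rho>] by simp
lemma T_upper: "\<rho> < i \<Longrightarrow> i < m \<Longrightarrow> T $$ (i,\<rho>) = 0"
  unfolding T_def using S_piv(2)[of "rinv \<rho>" i] rinv[of \<rho>] by simp

lemma N_upper: "j \<le> i \<Longrightarrow> i < m \<Longrightarrow> N $$ (i,j) = 0"
  unfolding N_def using T_diag T_upper T_carrier
  by (cases "i = j") auto

lemma S_T: "i < m \<Longrightarrow> c < m \<Longrightarrow> S $$ (i,c) = T $$ (i, r c)"
  unfolding T_def using r_lt rinv_r by simp

lemma Npow: "i < m \<Longrightarrow> j < m \<Longrightarrow> j < i + k \<Longrightarrow> (N ^\<^sub>m k) $$ (i,j) = 0"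
proof (induct k arbitrary: j)
  case 0 then show ?case using N_carrier by auto
next
  case (Suc k)
  have "(N ^\<^sub>m Suc k) $$ (i,j) = (\<Sum>l\<in>{0..<m}. (N ^\<^sub>m k) $$ (i,l) * N $$ (l,j))"
    using Suc.prems N_carrier by (simp add: scalar_prod_def)
  also have "\<dots> = (\<Sum>l\<in>{0..<m}. 0)"
  proof (rule sum.cong)
    fix l assume l: "l \<in> {0..<m}"
    show "(N ^\<^sub>m k) $$ (i,l) * N $$ (l,j) = 0"
    proof (cases "l < i + k")
      case True then show ?thesis using Suc.hyps[of l] Suc.prems l by auto
    next
      case False then show ?thesis using N_upper[of j l] Suc.prems l by auto
    qed
  qed simp
  finally show ?case by simp
qed

lemma Npow_m: "N ^\<^sub>m m = 0\<^sub>m m m"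
  using Npow[of _ _ m] N_carrier by (intro eq_matI) auto

primrec G :: "nat \<Rightarrow> complex mat" where
  "G 0 = 0\<^sub>m m m"
| "G (Suc k) = 1\<^sub>m m + G k * N"

lemma G_carrier: "G k \<in> carrier_mat m m"
  using N_carrier by (induct k) auto
lemma dimG[simp]: "dim_row (G k) = m" "dim_col (G k) = m" using G_carrier by auto

lemma TG: "T * G k = 1\<^sub>m m - N ^\<^sub>m k"
proof (induct k)
  case 0 then show ?case using T_carrier by (intro eq_matI) auto
next
  case (Suc k)
  have P: "N ^\<^sub>m k \<in> carrier_mat m m" using N_carrier by simp
  have "T * G (Suc k) = T * 1\<^sub>m m + T * (G k * N)"
    using T_carrier G_carrier N_carrier by (simp add: mult_add_distrib_mat[OF T_carrier one_carrier_mat mult_carrier_mat[OF G_carrier N_carrier]])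
  also have "T * (G k * N) = (T * G k) * N"
    using assoc_mult_mat[OF T_carrier G_carrier N_carrier] by simp
  also have "\<dots> = 1\<^sub>m m * N - N ^\<^sub>m k * N"
    unfolding Suc using P N_carrier by (simp add: minus_mult_distrib_mat[of _ m m])
  finally have eq: "T * G (Suc k) = T * 1\<^sub>m m + (1\<^sub>m m * N - N ^\<^sub>m k * N)" .
  show ?case unfolding eq using T_carrier N_carrier P
    by (intro eq_matI) (auto simp: N_def)
qed

lemma TG_m: "T * G m = 1\<^sub>m m"
  unfolding TG Npow_m by (intro eq_matI) auto

definition Sinv :: "complex mat" where "Sinv = mat m m (\<lambda>(c,i). G m $$ (r c, i))"

lemma Sinv_carrier: "Sinv \<in> carrier_mat m m" unfolding Sinv_def by simp

lemma S_Sinv: "S * Sinv = 1\<^sub>m m"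
proof (rule eq_matI)
  fix i i' assume i: "i < dim_row (1\<^sub>m m :: complex mat)" and i': "i' < dim_col (1\<^sub>m m :: complex mat)"
  have "(S * Sinv) $$ (i,i') = (\<Sum>c\<in>{0..<m}. T $$ (i, r c) * G m $$ (r c, i'))"
    using i i' S_carrier Sinv_carrier S_T r_lt by (auto simp: scalar_prod_def Sinv_def intro!: sum.cong)
  also have "\<dots> = (\<Sum>\<rho>\<in>{0..<m}. T $$ (i, \<rho>) * G m $$ (\<rho>, i'))"
    by (rule sum.reindex_bij_betw[OF r_bij', of "\<lambda>\<rho>. T $$ (i, \<rho>) * G m $$ (\<rho>, i')"])
  also have "\<dots> = (T * G m) $$ (i,i')"
    using i i' T_carrier G_carrier by (simp add: scalar_prod_def)
  finally show "(S * Sinv) $$ (i,i') = 1\<^sub>m m $$ (i,i')" unfolding TG_m .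
qed (use S_carrier Sinv_carrier in auto)

lemma Sinv_S: "Sinv * S = 1\<^sub>m m"
  by (rule mat_mult_left_right_inverse[OF S_carrier Sinv_carrier S_Sinv])

lemma sim: "similar_mat_wit B J S Sinv"
proof -
  have "B = B * (S * Sinv)" unfolding S_Sinv using B by simp
  also have "\<dots> = (B * S) * Sinv" using B S_carrier Sinv_carrier by simp
  also have "\<dots> = S * J * Sinv" unfolding BS ..
  finally show ?thesis unfolding similar_mat_wit_def Let_def
    using B S_carrier Sinv_carrier J_carrier S_Sinv Sinv_S by auto
qed

end

context blk begin

lemma w_bound: assumes a: "\<And>i j. i < m \<Longrightarrow> j < m \<Longrightarrow> cmod (B $$ (i,j)) \<le> a" and a0: "0 \<le> a"
  and t: "t < m"
  shows "i < m \<Longrightarrow> cmod (w t k $ i) \<le> (1 + real m * a)^k"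
proof (induct k arbitrary: i)
  case 0 then show ?case using t by auto
next
  case (Suc k)
  have "(w t (Suc k)) $ i = (\<Sum>l\<in>{0..<m}. B $$ (i,l) * w t k $ l)"
    using Suc.prems B w_carrier[of t k] by (auto simp: scalar_prod_def)
  also have "cmod \<dots> \<le> (\<Sum>l\<in>{0..<m}. cmod (B $$ (i,l) * w t k $ l))" by (rule norm_sum)
  also have "\<dots> \<le> (\<Sum>l\<in>{0..<m}. a * (1 + real m * a)^k)"
  proof (rule sum_mono)
    fix l assume l: "l \<in> {0..<m}"
    have "cmod (B $$ (i,l)) \<le> a" using a Suc.prems l by auto
    moreover have "cmod (w t k $ l) \<le> (1 + real m * a)^k" using Suc.hyps l by auto
    ultimately show "cmod (B $$ (i,l) * w t k $ l) \<le> a * (1 + real m * a)^k"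
      unfolding norm_mult by (rule mult_mono) (auto simp: a0)
  qed
  also have "\<dots> = real m * a * (1 + real m * a)^k" by simp
  also have "\<dots> \<le> (1 + real m * a)^Suc k"
  proof -
    have "0 \<le> (1 + real m * a)^k" using a0 by simp
    then show ?thesis by (simp add: distrib_right)
  qed
  finally show ?case .
qed

lemma S_bound: assumes a: "\<And>i j. i < m \<Longrightarrow> j < m \<Longrightarrow> cmod (B $$ (i,j)) \<le> a" and a0: "0 \<le> a"
  and i: "i < m" and c: "c < m"
  shows "cmod (S $$ (i,c)) \<le> (1 + real m * a)^(m - 1)"
proof -
  have ct: "c < tot" using c tot_eq by simp
  define t where "t = fst (idx L ts c)"
  define k where "k = snd (idx L ts c)"
  have t: "t < m" "k < L t" using idx_ok[OF ct] unfolding t_def k_def by auto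
  have "k \<le> m - 1" using kL_le[OF t] t by auto
  have "cmod (S $$ (i,c)) = cmod (w t k $ i)" unfolding S_def t_def k_def using i c by simp
  also have "\<dots> \<le> (1 + real m * a)^k" by (rule w_bound[OF a a0 t(1) i])
  also have "\<dots> \<le> (1 + real m * a)^(m-1)" using \<open>k \<le> m - 1\<close> a0 by (intro power_increasing) auto
  finally show ?thesis .
qed

lemma aux_ineq: fixes X :: real assumes X: "1 \<le> X"
  shows "1 + (X - 1) * (real k * X^(k-1)) \<le> real (Suc k) * X^k"
proof (cases k)
  case 0 then show ?thesis by simp
next
  case (Suc k')
  have "1 \<le> X^k" using X by simp
  moreover have "0 \<le> real k * X^(k-1)" using X by simp
  moreover have "X^k = X * X^(k-1)" using Suc by simp
  ultimately show ?thesis by (simp add: algebra_simps)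
qed

lemma G_bound: assumes b: "\<And>i j. i < m \<Longrightarrow> j < m \<Longrightarrow> cmod (N $$ (i,j)) \<le> b" and b0: "0 \<le> b"
  shows "i < m \<Longrightarrow> j < m \<Longrightarrow> cmod (G k $$ (i,j)) \<le> real k * (1 + real m * b)^(k-1)"
proof (induct k arbitrary: i j)
  case 0 then show ?case by simp
next
  case (Suc k)
  let ?X = "1 + real m * b"
  let ?s = "\<Sum>l\<in>{0..<m}. G k $$ (i,l) * N $$ (l,j)"
  have e: "G (Suc k) $$ (i,j) = (if i = j then 1 else 0) + ?s"
    using Suc.prems N_carrier G_carrier by (simp add: scalar_prod_def)
  have t1: "cmod (G (Suc k) $$ (i,j)) \<le> 1 + cmod ?s"
  proof -
    have "cmod ((if i = j then 1 else 0) :: complex) \<le> 1" by simp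
    then show ?thesis unfolding e using norm_triangle_ineq[of "(if i = j then 1 else 0) :: complex" ?s] by linarith
  qed
  have t2: "cmod ?s \<le> (\<Sum>l\<in>{0..<m}. cmod (G k $$ (i,l) * N $$ (l,j)))"
    by (rule norm_sum)
  have t3: "(\<Sum>l\<in>{0..<m}. cmod (G k $$ (i,l) * N $$ (l,j))) \<le> (\<Sum>l\<in>{0..<m}. (real k * ?X^(k-1)) * b)"
  proof (rule sum_mono)
    fix l assume l: "l \<in> {0..<m}"
    have "cmod (G k $$ (i,l)) \<le> real k * ?X^(k-1)" using Suc.hyps Suc.prems l by auto
    moreover have "cmod (N $$ (l,j)) \<le> b" using b Suc.prems l by auto
    ultimately show "cmod (G k $$ (i,l) * N $$ (l,j)) \<le> (real k * ?X^(k-1)) * b"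
      unfolding norm_mult by (rule mult_mono) (auto simp: b0)
  qed
  have t4: "(\<Sum>l\<in>{0..<m}. (real k * ?X^(k-1)) * b) = (?X - 1) * (real k * ?X^(k-1))" by simp
  have t5: "1 + (?X - 1) * (real k * ?X^(k-1)) \<le> real (Suc k) * ?X^k" by (rule aux_ineq) (use b0 in simp)
  from t1 t2 t3 t4 have "cmod (G (Suc k) $$ (i,j)) \<le> 1 + (?X - 1) * (real k * ?X^(k-1))" by linarith
  with t5 show ?case by (simp only: diff_Suc_1)
qed

end

context blk begin

lemma blk_result:
  assumes a: "\<And>i j. i < m \<Longrightarrow> j < m \<Longrightarrow> cmod (B $$ (i,j)) \<le> a" and a0: "0 \<le> a" and mn: "m \<le> n"
  shows "\<exists>S Sinv js. similar_mat_wit B (jordan_matrix js) S Sinv \<and> S \<in> carrier_mat m m \<and> Sinv \<in> carrier_mat m m \<and>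
     (\<forall>i j. i < m \<longrightarrow> j < m \<longrightarrow> cmod (S $$ (i,j)) \<le> real n * ((1 + real n) * (1 + a))^(n * (n - 1))
        \<and> cmod (Sinv $$ (i,j)) \<le> real n * ((1 + real n) * (1 + a))^(n * (n - 1)))"
proof (intro exI conjI allI impI)
  show "similar_mat_wit B (jordan_matrix (map (\<lambda>t. (L t, 0)) ts)) S Sinv" using sim unfolding J_def .
  show "S \<in> carrier_mat m m" by (rule S_carrier)
  show "Sinv \<in> carrier_mat m m" by (rule Sinv_carrier)
  define Y where "Y = (1 + real n) * (1 + a)"
  fix i j assume i: "i < m" and j: "j < m"
  then have n1: "1 \<le> n" using mn by auto
  have Y1: "1 + real n \<le> Y" unfolding Y_def using a0 by (simp add: algebra_simps)
  have Y1': "1 \<le> Y" using Y1 by simp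
  have Ym: "1 + real m * a \<le> Y"
  proof -
    have "real m * a \<le> real n * a" by (rule mult_right_mono) (use mn a0 in auto)
    moreover have "Y = 1 + a + real n + real n * a" unfolding Y_def by (simp add: algebra_simps)
    ultimately show ?thesis using a0 by linarith
  qed
  define b where "b = Y^(n-1)"
  have b1: "1 \<le> b" unfolding b_def using Y1' by simp
  have Sb: "cmod (S $$ (i',c)) \<le> b" if "i' < m" "c < m" for i' c
  proof -
    have "cmod (S $$ (i',c)) \<le> (1 + real m * a)^(m - 1)" by (rule S_bound[OF a a0 that])
    also have "\<dots> \<le> Y^(m-1)" by (rule power_mono[OF Ym]) (use a0 in simp)
    also have "\<dots> \<le> Y^(n-1)" by (rule power_increasing) (use mn Y1' in auto)
    finally show ?thesis unfolding b_def .
  qed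
  have E1: "b \<le> real n * Y^(n * (n - 1))"
  proof -
    have "b \<le> Y^(n * (n - 1))" unfolding b_def by (rule power_increasing) (use n1 Y1' in auto)
    also have "\<dots> \<le> real n * Y^(n * (n - 1))" using n1 Y1' by simp
    finally show ?thesis .
  qed
  show "cmod (S $$ (i,j)) \<le> real n * ((1 + real n) * (1 + a))^(n * (n - 1))"
    using Sb[OF i j] E1 unfolding Y_def by simp
  have Nb: "cmod (N $$ (i',j')) \<le> b" if "i' < m" "j' < m" for i' j'
  proof (cases "i' = j'")
    case True then show ?thesis using T_diag that b1 by (simp add: N_def)
  next
    case False
    then have "cmod (N $$ (i',j')) = cmod (S $$ (i', rinv j'))" using that by (simp add: N_def T_def)
    also have "\<dots> \<le> b" using Sb that rinv by auto
    finally show ?thesis .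
  qed
  have rc: "r i < m" using r_lt i .
  have "cmod (Sinv $$ (i,j)) = cmod (G m $$ (r i, j))" unfolding Sinv_def using i j by simp
  also have "\<dots> \<le> real m * (1 + real m * b)^(m-1)" by (rule G_bound[OF Nb _ rc j]) (use b1 in auto)
  also have "\<dots> \<le> real n * (Y^n)^(n-1)"
  proof (rule mult_mono)
    show "real m \<le> real n" using mn by simp
    have "1 + real m * b \<le> 1 + real n * b" using mn b1 by (simp add: mult_right_mono)
    also have "\<dots> \<le> (1 + real n) * b" using b1 by (simp add: algebra_simps)
    also have "\<dots> \<le> Y * b" using Y1 b1 by (simp add: mult_right_mono)
    also have "\<dots> = Y^n"
    proof -
      have "n = Suc (n - 1)" using n1 by simp
      then show ?thesis unfolding b_def by (metis power_Suc)
    qed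
    finally have X: "1 + real m * b \<le> Y^n" .
    have "(1 + real m * b)^(m-1) \<le> (Y^n)^(m-1)" by (rule power_mono[OF X]) (use b1 in simp)
    also have "\<dots> \<le> (Y^n)^(n-1)" by (rule power_increasing) (use mn Y1' in auto)
    finally show "(1 + real m * b)^(m-1) \<le> (Y^n)^(n-1)" .
  qed (use b1 in auto)
  also have "\<dots> = real n * ((1 + real n) * (1 + a))^(n * (n - 1))" unfolding Y_def by (simp add: power_mult)
  finally show "cmod (Sinv $$ (i,j)) \<le> real n * ((1 + real n) * (1 + a))^(n * (n - 1))" .
qed

end

lemma col_len_facts: fixes B :: "complex mat"
  assumes nz: "nonzero_col B j"
  shows "col_len B j < dim_row B" "B $$ (col_len B j, j) \<noteq> 0"
    "\<And>i. col_len B j < i \<Longrightarrow> i < dim_row B \<Longrightarrow> B $$ (i,j) = 0"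
proof -
  obtain i0 where i0: "i0 < dim_row B" "B $$ (i0,j) \<noteq> 0" using nz unfolding nonzero_col_def by auto
  let ?P = "\<lambda>i. i < dim_row B \<and> B $$ (i,j) \<noteq> 0"
  have "?P (col_len B j)" unfolding col_len_def
    by (rule GreatestI_nat[of ?P i0 "dim_row B"]) (use i0 in auto)
  then show "col_len B j < dim_row B" "B $$ (col_len B j, j) \<noteq> 0" by auto
  fix i assume i: "col_len B j < i" "i < dim_row B"
  show "B $$ (i,j) = 0"
  proof (rule ccontr)
    assume "B $$ (i,j) \<noteq> 0"
    then have "i \<le> col_len B j" unfolding col_len_def
      by (intro Greatest_le_nat[of ?P i "dim_row B"]) (use i in auto)
    then show False using i by simp
  qed
qed

lemma block_main:
  fixes B :: "complex mat"
  assumes B: "B \<in> carrier_mat m m" and rce: "reduced_col_echelon B" and nil: "B ^\<^sub>m k = 0\<^sub>m m m"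
    and a: "\<And>i j. i < m \<Longrightarrow> j < m \<Longrightarrow> cmod (B $$ (i,j)) \<le> a" and a0: "0 \<le> a" and mn: "m \<le> n"
  shows "\<exists>S Sinv js. similar_mat_wit B (jordan_matrix js) S Sinv \<and> S \<in> carrier_mat m m \<and> Sinv \<in> carrier_mat m m \<and>
     (\<forall>i j. i < m \<longrightarrow> j < m \<longrightarrow> cmod (S $$ (i,j)) \<le> real n * ((1 + real n) * (1 + a))^(n * (n - 1))
        \<and> cmod (Sinv $$ (i,j)) \<le> real n * ((1 + real n) * (1 + a))^(n * (n - 1)))"
proof -
  have dr: "dim_row B = m" "dim_col B = m" using B by auto
  obtain z where zm: "z \<le> m" and zc0: "\<forall>j<z. \<not> nonzero_col B j"
    and nzc: "\<forall>j. z \<le> j \<and> j < m \<longrightarrow> nonzero_col B j"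
    and mono: "\<forall>j j'. z \<le> j \<and> j < j' \<and> j' < m \<longrightarrow> col_len B j < col_len B j'"
    using rce unfolding reduced_col_echelon_def col_echelon_def dr by auto
  define p where "p = col_len B"
  have zc: "B $$ (i,j) = 0" if "j < z" "i < m" for i j
    using zc0 that unfolding nonzero_col_def dr by auto
  have pm: "p j < m" and pabove: "\<And>i. p j < i \<Longrightarrow> i < m \<Longrightarrow> B $$ (i,j) = 0"
    and piv1: "B $$ (p j, j) = 1" if "z \<le> j" "j < m" for j
  proof -
    have nz: "nonzero_col B j" using nzc that by auto
    show "p j < m" using col_len_facts(1)[OF nz] unfolding p_def dr .
    show "\<And>i. p j < i \<Longrightarrow> i < m \<Longrightarrow> B $$ (i,j) = 0" using col_len_facts(3)[OF nz] unfolding p_def dr .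
    show "B $$ (p j, j) = 1" using rce nz that dr unfolding reduced_col_echelon_def p_def by auto
  qed
  have pmono: "p j < p j'" if "z \<le> j" "j < j'" "j' < m" for j j' using mono that unfolding p_def by auto
  have padd: "p j + d \<le> p (j + d)" if "z \<le> j" "j + d < m" for j d
    using that
  proof (induct d)
    case (Suc d)
    then have "p j + d \<le> p (j + d)" by auto
    moreover have "p (j + d) < p (j + Suc d)" using pmono[of "j + d" "j + Suc d"] Suc.prems by auto
    ultimately show ?case by simp
  qed simp
  have ple: "p j \<le> j" if "z \<le> j" "j < m" for j
  proof -
    have "z \<le> m - 1" "m - 1 < m" using that by auto
    then have "p (m - 1) < m" using pm by blast
    moreover have "p j + (m - 1 - j) \<le> p (j + (m - 1 - j))" using padd[OF that(1), of "m - 1 - j"] that by auto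
    ultimately show ?thesis using that by auto
  qed
  have plt: "p j < j" if j: "z \<le> j" "j < m" for j
  proof (rule ccontr)
    assume "\<not> p j < j"
    then have pj: "p j = j" using ple[OF j] by simp
    have m1: "z \<le> m - 1" "m - 1 < m" using j by auto
    have "p (m - 1) = m - 1" using padd[OF j(1), of "m - 1 - j"] pm[OF m1] pj j by auto
    then have d1: "B $$ (m-1, m-1) = 1" using piv1[OF m1] by simp
    have row0: "B $$ (m-1, l) = 0" if l: "l < m" "l \<noteq> m - 1" for l
    proof (cases "l < z")
      case True then show ?thesis using zc l m1 by auto
    next
      case False
      then have "p l < m - 1" using ple[of l] l by auto
      then show ?thesis using pabove[of l "m-1"] False l m1 by auto
    qed
    have rowk: "\<forall>c<m. (B ^\<^sub>m k') $$ (m-1, c) = (if c = m - 1 then 1 else 0)" for k'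
    proof (induct k')
      case 0 then show ?case using m1 dr by auto
    next
      case (Suc k')
      show ?case
      proof (intro allI impI)
        fix c assume c: "c < m"
        have "(B ^\<^sub>m Suc k') $$ (m-1, c) = (\<Sum>l\<in>{0..<m}. (B ^\<^sub>m k') $$ (m-1, l) * B $$ (l, c))"
          using c m1 B by (simp add: scalar_prod_def)
        also have "\<dots> = (\<Sum>l\<in>{0..<m}. if l = m - 1 then B $$ (m-1, c) else 0)"
          using Suc by (intro sum.cong) auto
        also have "\<dots> = B $$ (m-1, c)" using m1 by simp
        also have "\<dots> = (if c = m - 1 then 1 else 0)" using d1 row0 c by auto
        finally show "(B ^\<^sub>m Suc k') $$ (m-1, c) = (if c = m - 1 then 1 else 0)" .
      qed
    qed
    have "(B ^\<^sub>m k) $$ (m-1, m-1) = 1" using rowk[of k] m1 by auto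
    then show False using nil m1 by simp
  qed
  interpret blk B m z p
    by unfold_locales (use B zm zc plt piv1 pabove pmono in auto)
  show ?thesis by (rule blk_result[OF a a0 mn])
qed

lemma elements_block_sub: "B \<in> set Bs \<Longrightarrow> elements_mat B \<subseteq> elements_mat (diag_block_mat (Bs :: complex mat list))"
proof (induct Bs)
  case (Cons A As)
  define D where "D = diag_block_mat As"
  have eq: "diag_block_mat (A # As) = four_block_mat A (0\<^sub>m (dim_row A) (dim_col D)) (0\<^sub>m (dim_row D) (dim_col A)) D"
    unfolding D_def by (simp add: Let_def)
  have c: "diag_block_mat (A # As) \<in> carrier_mat (dim_row A + dim_row D) (dim_col A + dim_col D)"
    unfolding eq by (intro carrier_matI) simp_all
  have i1: "diag_block_mat (A # As) $$ (i,j) = A $$ (i,j)" if "i < dim_row A" "j < dim_col A" for i j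
    unfolding eq using that by (subst index_mat_four_block) auto
  have i2: "diag_block_mat (A # As) $$ (i + dim_row A, j + dim_col A) = D $$ (i,j)" if "i < dim_row D" "j < dim_col D" for i j
    unfolding eq using that by (subst index_mat_four_block) auto
  show ?case
  proof (cases "B = A")
    case True
    show ?thesis
    proof
      fix x assume "x \<in> elements_mat B"
      then obtain i j where ij: "i < dim_row A" "j < dim_col A" "x = A $$ (i,j)" using True by blast
      show "x \<in> elements_mat (diag_block_mat (A # As))"
        by (rule elements_matI[OF c, of i j]) (use ij i1 in auto)
    qed
  next
    case False
    then have sub: "elements_mat B \<subseteq> elements_mat D" using Cons unfolding D_def by auto
    show ?thesis
    proof
      fix x assume "x \<in> elements_mat B"
      then have "x \<in> elements_mat D" using sub by blast
      then obtain i j where ij: "i < dim_row D" "j < dim_col D" "x = D $$ (i,j)" by blast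
      show "x \<in> elements_mat (diag_block_mat (A # As))"
        by (rule elements_matI[OF c, of "i + dim_row A" "j + dim_col A"]) (use ij i2 in auto)
    qed
  qed
qed simp

lemma assemble:
  assumes "\<And>B. B \<in> set Bs \<Longrightarrow> \<exists>S Sinv js. similar_mat_wit B (jordan_matrix js) S Sinv \<and>
     S \<in> carrier_mat (dim_row B) (dim_row B) \<and> Sinv \<in> carrier_mat (dim_row B) (dim_row B) \<and>
     (\<forall>x\<in>elements_mat S. cmod x \<le> E) \<and> (\<forall>x\<in>elements_mat Sinv. cmod x \<le> E)"
  shows "\<exists>Ss Sinvs jss. length Ss = length Bs \<and>
     (\<forall>k<length Bs. Ss ! k \<in> carrier_mat (dim_row (Bs ! k)) (dim_row (Bs ! k))) \<and>
     similar_mat_wit (diag_block_mat Bs) (jordan_matrix (concat jss)) (diag_block_mat Ss) (diag_block_mat Sinvs) \<and>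
     (\<forall>S\<in>set Ss. \<forall>x\<in>elements_mat S. cmod x \<le> E) \<and> (\<forall>S\<in>set Sinvs. \<forall>x\<in>elements_mat S. cmod x \<le> E)"
  using assms
proof (induct Bs)
  case Nil
  have "similar_mat_wit (diag_block_mat []) (jordan_matrix (concat [])) (diag_block_mat []) (diag_block_mat ([] :: complex mat list))"
    unfolding similar_mat_wit_def jordan_matrix_def by (auto intro!: eq_matI)
  then show ?case by (intro exI[of _ "[]"]) auto
next
  case (Cons B Bs)
  obtain Ss Sinvs jss where IH: "length Ss = length Bs"
     "\<forall>k<length Bs. Ss ! k \<in> carrier_mat (dim_row (Bs ! k)) (dim_row (Bs ! k))"
     "similar_mat_wit (diag_block_mat Bs) (jordan_matrix (concat jss)) (diag_block_mat Ss) (diag_block_mat Sinvs)"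
     "\<forall>S\<in>set Ss. \<forall>x\<in>elements_mat S. cmod x \<le> E" "\<forall>S\<in>set Sinvs. \<forall>x\<in>elements_mat S. cmod x \<le> E"
    using Cons by auto
  obtain S Sinv js where B: "similar_mat_wit B (jordan_matrix js) S Sinv"
     "S \<in> carrier_mat (dim_row B) (dim_row B)" "Sinv \<in> carrier_mat (dim_row B) (dim_row B)"
     "\<forall>x\<in>elements_mat S. cmod x \<le> E" "\<forall>x\<in>elements_mat Sinv. cmod x \<le> E"
    using Cons.prems[of B] by auto
  define n1 where "n1 = dim_row B"
  define D where "D = diag_block_mat Bs"
  define n2 where "n2 = dim_row D"
  define SS where "SS = diag_block_mat Ss"
  define SI where "SI = diag_block_mat Sinvs"
  define J1 where "J1 = jordan_matrix js"
  define J2 where "J2 = jordan_matrix (concat jss)"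
  have w1': "similar_mat_wit B J1 S Sinv" using B(1) unfolding J1_def .
  have w2': "similar_mat_wit D J2 SS SI" using IH(3) unfolding J2_def D_def SS_def SI_def .
  have Bc: "B \<in> carrier_mat n1 n1" using similar_mat_witD[OF refl w1'] unfolding n1_def by blast
  have Dc: "D \<in> carrier_mat n2 n2" using similar_mat_witD[OF refl w2'] unfolding n2_def by blast
  note w1 = similar_mat_witD2[OF Bc w1']
  note w2 = similar_mat_witD2[OF Dc w2']
  have dims: "dim_row B = n1" "dim_col B = n1" "dim_row D = n2" "dim_col D = n2"
    "dim_row S = n1" "dim_col S = n1" "dim_row SS = n2" "dim_col SS = n2"
    "dim_row Sinv = n1" "dim_col Sinv = n1" "dim_row SI = n2" "dim_col SI = n2"
    "dim_row J1 = n1" "dim_col J1 = n1" "dim_row J2 = n2" "dim_col J2 = n2"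
    using w1(4-7) w2(4-7) by (meson carrier_matD)+
  have z1: "0\<^sub>m n1 n2 = S * 0\<^sub>m n1 n2 * SI"
    using right_mult_zero_mat[OF w1(6), of n2] left_mult_zero_mat[OF w2(7), of n1] by simp
  have z2: "0\<^sub>m n2 n1 = SS * 0\<^sub>m n2 n1 * Sinv"
    using right_mult_zero_mat[OF w2(6), of n1] left_mult_zero_mat[OF w1(7), of n2] by simp
  have four: "similar_mat_wit (four_block_mat B (0\<^sub>m n1 n2) (0\<^sub>m n2 n1) D)
     (four_block_mat J1 (0\<^sub>m n1 n2) (0\<^sub>m n2 n1) J2)
     (four_block_mat S (0\<^sub>m n1 n2) (0\<^sub>m n2 n1) SS)
     (four_block_mat Sinv (0\<^sub>m n1 n2) (0\<^sub>m n2 n1) SI)"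
    by (rule similar_mat_wit_four_block[OF w1' w2' z1 z2 Bc Dc zero_carrier_mat zero_carrier_mat])
  have e1: "diag_block_mat (B # Bs) = four_block_mat B (0\<^sub>m n1 n2) (0\<^sub>m n2 n1) D"
    unfolding diag_block_mat.simps Let_def D_def[symmetric] by (simp only: dims)
  have e2: "diag_block_mat (S # Ss) = four_block_mat S (0\<^sub>m n1 n2) (0\<^sub>m n2 n1) SS"
    unfolding diag_block_mat.simps Let_def SS_def[symmetric] by (simp only: dims)
  have e3: "diag_block_mat (Sinv # Sinvs) = four_block_mat Sinv (0\<^sub>m n1 n2) (0\<^sub>m n2 n1) SI"
    unfolding diag_block_mat.simps Let_def SI_def[symmetric] by (simp only: dims)
  have e4: "jordan_matrix (concat (js # jss)) = four_block_mat J1 (0\<^sub>m n1 n2) (0\<^sub>m n2 n1) J2"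
  proof -
    have "jordan_matrix (concat (js # jss)) = diag_block_mat (map jordan_matrix (js # jss))"
      by (rule jordan_matrix_concat_diag_block_mat)
    also have "\<dots> = four_block_mat J1 (0\<^sub>m (dim_row J1) (dim_col J2)) (0\<^sub>m (dim_row J2) (dim_col J1)) J2"
      unfolding J1_def J2_def jordan_matrix_concat_diag_block_mat list.map diag_block_mat.simps Let_def ..
    finally show ?thesis by (simp only: dims)
  qed
  have sim: "similar_mat_wit (diag_block_mat (B # Bs)) (jordan_matrix (concat (js # jss)))
      (diag_block_mat (S # Ss)) (diag_block_mat (Sinv # Sinvs))"
      unfolding e1 e2 e3 e4 by (rule four)
  show ?case
  proof (rule exI[of _ "S # Ss"], rule exI[of _ "Sinv # Sinvs"], rule exI[of _ "js # jss"], intro conjI)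
    show "similar_mat_wit (diag_block_mat (B # Bs)) (jordan_matrix (concat (js # jss)))
      (diag_block_mat (S # Ss)) (diag_block_mat (Sinv # Sinvs))" by (rule sim)
    show "\<forall>k<length (B # Bs). (S # Ss) ! k \<in> carrier_mat (dim_row ((B # Bs) ! k)) (dim_row ((B # Bs) ! k))"
      using IH(2) B(2) by (auto simp: nth_Cons split: nat.split)
    show "length (S # Ss) = length (B # Bs)" using IH(1) by simp
    show "\<forall>S\<in>set (S # Ss). \<forall>x\<in>elements_mat S. cmod x \<le> E" using IH(4) B(4) by simp
    show "\<forall>S\<in>set (Sinv # Sinvs). \<forall>x\<in>elements_mat S. cmod x \<le> E" using IH(5) B(5) by simp
  qed
qed

lemma nn1_le_fact: "n * (n - 1) \<le> fact n"
proof (cases n)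
  case (Suc k)
  have "Suc k * k \<le> Suc k * fact k" using fact_ge_self[of k] by (intro mult_le_mono2) simp
  then show ?thesis using Suc by simp
qed simp

definition Cn :: "nat \<Rightarrow> real" where
  "Cn n = real n * (real n * (real n * (1 + real n)^(n * (n - 1))))"

lemma main:
  fixes Bs :: "complex mat list" and n :: nat
  assumes blocks: "\<forall>B\<in>set Bs. square_mat B \<and> reduced_col_echelon B"
    and Ac: "diag_block_mat Bs \<in> carrier_mat n n" and nil: "nilpotent_mat (diag_block_mat Bs)"
    and nz: "diag_block_mat Bs \<noteq> 0\<^sub>m n n"
  shows "\<exists>Ss Sinv. length Ss = length Bs \<and> (\<forall>k<length Bs. Ss ! k \<in> carrier_mat (dim_row (Bs ! k)) (dim_row (Bs ! k))) \<and>
     Sinv \<in> carrier_mat n n \<and> diag_block_mat Ss * Sinv = 1\<^sub>m n \<and> Sinv * diag_block_mat Ss = 1\<^sub>m n \<and>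
     opnorm (diag_block_mat Ss) \<le> Cn n * (1 + opnorm (diag_block_mat Bs)) ^ fact n \<and>
     opnorm Sinv \<le> Cn n * (1 + opnorm (diag_block_mat Bs)) ^ fact n \<and>
     (\<exists>js. Sinv * diag_block_mat Bs * diag_block_mat Ss = jordan_matrix js)"
proof -
  define A where "A = diag_block_mat Bs"
  define a where "a = opnorm A"
  have A: "A \<in> carrier_mat n n" using Ac unfolding A_def .
  have n1: "1 \<le> n"
  proof (rule ccontr)
    assume "\<not> 1 \<le> n"
    then have "n = 0" by simp
    then have "A = 0\<^sub>m n n" using A by (intro eq_matI) auto
    then show False using nz unfolding A_def by simp
  qed
  have elemA: "cmod x \<le> a" if x: "x \<in> elements_mat A" for x
  proof -
    obtain i j where "i < dim_row A" "j < dim_col A" "x = A $$ (i,j)" using x by blast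
    then show ?thesis using entry_le_opnorm[OF A, of i j] A unfolding a_def by auto
  qed
  have a0: "0 \<le> a"
  proof -
    have "cmod (A $$ (0, 0)) \<le> opnorm A" using entry_le_opnorm[OF A, of 0 0] n1 by simp
    then show ?thesis unfolding a_def using norm_ge_zero[of "A $$ (0,0)"] by linarith
  qed
  obtain k where Ak: "A ^\<^sub>m k = 0\<^sub>m n n" using nil A unfolding nilpotent_mat_def A_def by auto
  have sq: "Ball (set Bs) square_mat" using blocks by auto
  have Akd: "A ^\<^sub>m k = diag_block_mat (map (\<lambda>B. B ^\<^sub>m k) Bs)" unfolding A_def by (rule diag_block_pow_mat[OF sq])
  define E where "E = real n * ((1 + real n) * (1 + a))^(n * (n - 1))"
  have E0: "0 \<le> E" unfolding E_def using a0 by simp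
  have blockres: "\<exists>S Sinv js. similar_mat_wit B (jordan_matrix js) S Sinv \<and>
     S \<in> carrier_mat (dim_row B) (dim_row B) \<and> Sinv \<in> carrier_mat (dim_row B) (dim_row B) \<and>
     (\<forall>x\<in>elements_mat S. cmod x \<le> E) \<and> (\<forall>x\<in>elements_mat Sinv. cmod x \<le> E)" if B: "B \<in> set Bs" for B
  proof -
    define m where "m = dim_row B"
    have Bc: "B \<in> carrier_mat m m" using blocks B unfolding m_def carrier_mat_def by auto
    have rce: "reduced_col_echelon B" using blocks B by auto
    have "n = sum_list (map dim_row Bs)" using A unfolding A_def dim_diag_block_mat(1)[symmetric] by auto
    then have mn: "m \<le> n" unfolding m_def using B by (simp add: member_le_sum_list)
    have Bk: "B ^\<^sub>m k = 0\<^sub>m m m"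
    proof (rule eq_matI)
      fix i j assume ij: "i < dim_row (0\<^sub>m m m :: complex mat)" "j < dim_col (0\<^sub>m m m :: complex mat)"
      have "(B ^\<^sub>m k) $$ (i,j) \<in> elements_mat (B ^\<^sub>m k)" using ij Bc by (intro elements_matI[of _ m m]) auto
      also have "\<dots> \<subseteq> elements_mat (A ^\<^sub>m k)" unfolding Akd using B by (intro elements_block_sub) auto
      also have "\<dots> \<subseteq> {0}" unfolding Ak by (rule elements_0_mat)
      finally show "(B ^\<^sub>m k) $$ (i,j) = 0\<^sub>m m m $$ (i,j)" using ij by simp
    qed (use Bc in auto)
    have Bent: "cmod (B $$ (i,j)) \<le> a" if "i < m" "j < m" for i j
    proof -
      have "B $$ (i,j) \<in> elements_mat B" using that Bc by (intro elements_matI[of _ m m]) auto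
      also have "\<dots> \<subseteq> elements_mat A" unfolding A_def using B by (rule elements_block_sub)
      finally show ?thesis by (rule elemA)
    qed
    obtain S Sinv js where res: "similar_mat_wit B (jordan_matrix js) S Sinv" "S \<in> carrier_mat m m" "Sinv \<in> carrier_mat m m"
      "\<forall>i j. i < m \<longrightarrow> j < m \<longrightarrow> cmod (S $$ (i,j)) \<le> E \<and> cmod (Sinv $$ (i,j)) \<le> E"
      using block_main[OF Bc rce Bk Bent a0 mn] unfolding E_def by blast
    show ?thesis
    proof (intro exI conjI)
      show "similar_mat_wit B (jordan_matrix js) S Sinv" by (rule res(1))
      show "S \<in> carrier_mat (dim_row B) (dim_row B)" using res(2) unfolding m_def .
      show "Sinv \<in> carrier_mat (dim_row B) (dim_row B)" using res(3) unfolding m_def .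
      show "\<forall>x\<in>elements_mat S. cmod x \<le> E"
      proof
        fix x assume "x \<in> elements_mat S"
        then obtain i j where "i < dim_row S" "j < dim_col S" "x = S $$ (i,j)" by blast
        then show "cmod x \<le> E" using res(2,4) by auto
      qed
      show "\<forall>x\<in>elements_mat Sinv. cmod x \<le> E"
      proof
        fix x assume "x \<in> elements_mat Sinv"
        then obtain i j where "i < dim_row Sinv" "j < dim_col Sinv" "x = Sinv $$ (i,j)" by blast
        then show "cmod x \<le> E" using res(3,4) by auto
      qed
    qed
  qed
  obtain Ss Sinvs jss where as: "length Ss = length Bs"
     "\<forall>k<length Bs. Ss ! k \<in> carrier_mat (dim_row (Bs ! k)) (dim_row (Bs ! k))"
     "similar_mat_wit (diag_block_mat Bs) (jordan_matrix (concat jss)) (diag_block_mat Ss) (diag_block_mat Sinvs)"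
     "\<forall>S\<in>set Ss. \<forall>x\<in>elements_mat S. cmod x \<le> E" "\<forall>S\<in>set Sinvs. \<forall>x\<in>elements_mat S. cmod x \<le> E"
    using assemble[of Bs E, OF blockres] by blast
  define S where "S = diag_block_mat Ss"
  define Si where "Si = diag_block_mat Sinvs"
  define J where "J = jordan_matrix (concat jss)"
  have w: "similar_mat_wit A J S Si" using as(3) unfolding A_def S_def Si_def J_def .
  note wd = similar_mat_witD2[OF A w]
  have JA: "Si * A * S = J" using similar_mat_wit_sym[OF w] unfolding similar_mat_wit_def Let_def by auto
  have entS: "cmod (S $$ (i,j)) \<le> E" if "i < n" "j < n" for i j
  proof -
    have "S $$ (i,j) \<in> elements_mat S" using that wd(6) by (intro elements_matI[of _ n n]) auto
    then have "S $$ (i,j) \<in> {0} \<union> \<Union> (set (map elements_mat Ss))" using elements_diag_block_mat[of Ss] unfolding S_def by blast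
    then show ?thesis using as(4) E0 by auto
  qed
  have entSi: "cmod (Si $$ (i,j)) \<le> E" if "i < n" "j < n" for i j
  proof -
    have "Si $$ (i,j) \<in> elements_mat Si" using that wd(7) by (intro elements_matI[of _ n n]) auto
    then have "Si $$ (i,j) \<in> {0} \<union> \<Union> (set (map elements_mat Sinvs))" using elements_diag_block_mat[of Sinvs] unfolding Si_def by blast
    then show ?thesis using as(5) E0 by auto
  qed
  have bound: "real n * (real n * E) \<le> Cn n * (1 + a) ^ fact n"
  proof -
    have "((1 + real n) * (1 + a))^(n * (n - 1)) = (1 + real n)^(n * (n - 1)) * (1 + a)^(n * (n - 1))"
      by (rule power_mult_distrib)
    also have "\<dots> \<le> (1 + real n)^(n * (n - 1)) * (1 + a)^(fact n)"
      by (rule mult_left_mono) (use a0 nn1_le_fact[of n] in \<open>auto intro!: power_increasing\<close>)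
    finally have "E \<le> real n * ((1 + real n)^(n * (n - 1)) * (1 + a)^(fact n))"
      unfolding E_def by (rule mult_left_mono) simp
    then have "real n * (real n * E) \<le> real n * (real n * (real n * ((1 + real n)^(n * (n - 1)) * (1 + a)^(fact n))))"
      by (intro mult_left_mono) auto
    then show ?thesis unfolding Cn_def by (simp add: mult.assoc)
  qed
  show ?thesis
  proof (rule exI[of _ Ss], rule exI[of _ Si], intro conjI)
    show "length Ss = length Bs" by (rule as(1))
    show "\<forall>k<length Bs. Ss ! k \<in> carrier_mat (dim_row (Bs ! k)) (dim_row (Bs ! k))" by (rule as(2))
    show "Si \<in> carrier_mat n n" by (rule wd(7))
    show "diag_block_mat Ss * Si = 1\<^sub>m n" using wd(1) unfolding S_def .
    show "Si * diag_block_mat Ss = 1\<^sub>m n" using wd(2) unfolding S_def .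
    show "opnorm (diag_block_mat Ss) \<le> Cn n * (1 + opnorm (diag_block_mat Bs)) ^ fact n"
      using opnorm_le[OF wd(6) entS] bound unfolding S_def a_def A_def by linarith
    show "opnorm Si \<le> Cn n * (1 + opnorm (diag_block_mat Bs)) ^ fact n"
      using opnorm_le[OF wd(7) entSi] bound unfolding a_def A_def by linarith
    show "\<exists>js. Si * diag_block_mat Bs * diag_block_mat Ss = jordan_matrix js"
      using JA unfolding A_def S_def J_def by blast
  qed
qed

theorem proposition6:
  "\<forall>n::nat. \<exists>C::real. \<forall>(Bs :: complex mat list).
     (\<forall>B\<in>set Bs. square_mat B \<and> reduced_col_echelon B) \<longrightarrow>
     (let A = diag_block_mat Bs in
       A \<in> carrier_mat n n \<longrightarrow> nilpotent_mat A \<longrightarrow> A \<noteq> 0\<^sub>m n n \<longrightarrow>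
       (\<exists>Ss :: complex mat list. \<exists>Sinv :: complex mat.
          length Ss = length Bs \<and>
          (\<forall>k<length Bs. Ss ! k \<in> carrier_mat (dim_row (Bs ! k)) (dim_row (Bs ! k))) \<and>
          (let S = diag_block_mat Ss in
            Sinv \<in> carrier_mat n n \<and> S * Sinv = 1\<^sub>m n \<and> Sinv * S = 1\<^sub>m n \<and>
            opnorm S \<le> C * (1 + opnorm A) ^ fact n \<and>
            opnorm Sinv \<le> C * (1 + opnorm A) ^ fact n \<and>
            (\<exists>js :: (nat \<times> complex) list. Sinv * A * S = jordan_matrix js))))"
proof (intro allI)
  fix n :: nat
  show "\<exists>C::real. \<forall>(Bs :: complex mat list).
     (\<forall>B\<in>set Bs. square_mat B \<and> reduced_col_echelon B) \<longrightarrow>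
     (let A = diag_block_mat Bs in
       A \<in> carrier_mat n n \<longrightarrow> nilpotent_mat A \<longrightarrow> A \<noteq> 0\<^sub>m n n \<longrightarrow>
       (\<exists>Ss :: complex mat list. \<exists>Sinv :: complex mat.
          length Ss = length Bs \<and>
          (\<forall>k<length Bs. Ss ! k \<in> carrier_mat (dim_row (Bs ! k)) (dim_row (Bs ! k))) \<and>
          (let S = diag_block_mat Ss in
            Sinv \<in> carrier_mat n n \<and> S * Sinv = 1\<^sub>m n \<and> Sinv * S = 1\<^sub>m n \<and>
            opnorm S \<le> C * (1 + opnorm A) ^ fact n \<and>
            opnorm Sinv \<le> C * (1 + opnorm A) ^ fact n \<and>
            (\<exists>js :: (nat \<times> complex) list. Sinv * A * S = jordan_matrix js))))"
    unfolding Let_def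
    by (rule exI[of _ "Cn n"]) (intro allI impI main; assumption)
qed

end
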